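(* Let $G=(V,E)$ and $H$ be graphs such that $H$ is obtained from $G$ by a $Q$-switching with switching set $X$. Let $Y\subseteq V\setminus X$ and let $F$ be a set of edges of $G[X\cup Y]$ with $F\cap E(G_X)=\emptyset$. Then $H[X\cup Y]-F$ is obtained from $G[X\cup Y]-F$ by a $Q$-switching with switching set $X$; in particular these two graphs are cospectral.
   Context: Graphs are finite and simple. $Q$ is a $k\times k$ real orthogonal matrix with no integral rows (no row consisting only of integers). $H$ is obtained from $G$ by a $Q$-switching with switching set $X$ ($|X|=k$) if $H$ has the same vertex set $V$ and, after ordering the vertices with $X$ first, $A_H=M^TA_GM$ with $M=\operatorname{diag}(Q,-I_a,I_b)$ block diagonal, $a+b=|V|-k$. For $S\subseteq V$, $G[S]$ and $H[S]$ denote induced subgraphs; $\Gamma-F$ denotes removal of the edges $F$. The neighborhood graph $G_X$ has vertex set $X\cup N(X)$, where $N(X)$ is the set of vertices adjacent to some vertex of $X$, and edge set the edges of $G$ having at least one endpoint in $X$. Two graphs are cospectral if their adjacency matrices have the same spectrum. *)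

theory Defs
  imports Complex_Main "Jordan_Normal_Form.Char_Poly"
begin

text \<open>A graph is a pair (vertex set, edge set); edges are 2-element subsets of the vertex set.\<close>
type_synonym 'a graph = "'a set \<times> 'a set set"

definition verts :: "'a graph \<Rightarrow> 'a set" where "verts G = fst G"
definition edges :: "'a graph \<Rightarrow> 'a set set" where "edges G = snd G"

definition simple_graph :: "'a graph \<Rightarrow> bool" where
  "simple_graph G \<longleftrightarrow> finite (verts G) \<and>
     (\<forall>e\<in>edges G. e \<subseteq> verts G \<and> card e = 2)"

definition adj :: "'a graph \<Rightarrow> 'a \<Rightarrow> 'a \<Rightarrow> real" where
  "adj G u v = (if {u, v} \<in> edges G then 1 else 0)"

definition induced :: "'a graph \<Rightarrow> 'a set \<Rightarrow> 'a graph" where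
  "induced G S = (S, {e \<in> edges G. e \<subseteq> S})"

definition remove_edges :: "'a graph \<Rightarrow> 'a set set \<Rightarrow> 'a graph" where
  "remove_edges G F = (verts G, edges G - F)"

definition nbhd :: "'a graph \<Rightarrow> 'a set \<Rightarrow> 'a set" where
  "nbhd G X = {v. \<exists>x\<in>X. {x, v} \<in> edges G}"

definition nbhd_graph :: "'a graph \<Rightarrow> 'a set \<Rightarrow> 'a graph" where
  "nbhd_graph G X = (X \<union> nbhd G X, {e \<in> edges G. e \<inter> X \<noteq> {}})"

definition orthogonal_on :: "'a set \<Rightarrow> ('a \<Rightarrow> 'a \<Rightarrow> real) \<Rightarrow> bool" where
  "orthogonal_on X Q \<longleftrightarrow>
     (\<forall>i\<in>X. \<forall>j\<in>X. (\<Sum>k\<in>X. Q i k * Q j k) = (if i = j then 1 else 0))"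

definition no_integral_rows :: "'a set \<Rightarrow> ('a \<Rightarrow> 'a \<Rightarrow> real) \<Rightarrow> bool" where
  "no_integral_rows X Q \<longleftrightarrow> (\<forall>i\<in>X. \<exists>j\<in>X. Q i j \<notin> \<int>)"

text \<open>The block matrix M = diag(Q, -I_a, I_b), indexed by vertices; s gives the sign
  (-1 or 1) of each vertex outside X.\<close>
definition switch_mat :: "('a \<Rightarrow> 'a \<Rightarrow> real) \<Rightarrow> 'a set \<Rightarrow> ('a \<Rightarrow> real) \<Rightarrow> 'a \<Rightarrow> 'a \<Rightarrow> real" where
  "switch_mat Q X s w u =
     (if w \<in> X \<and> u \<in> X then Q w u else if w = u \<and> u \<notin> X then s u else 0)"

definition Q_switching :: "'a graph \<Rightarrow> 'a graph \<Rightarrow> ('a \<Rightarrow> 'a \<Rightarrow> real) \<Rightarrow> 'a set \<Rightarrow> bool" where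
  "Q_switching G H Q X \<longleftrightarrow>
     simple_graph G \<and> simple_graph H \<and> verts H = verts G \<and> X \<subseteq> verts G \<and>
     orthogonal_on X Q \<and> no_integral_rows X Q \<and>
     (\<exists>s. (\<forall>v\<in>verts G - X. s v = -1 \<or> s v = 1) \<and>
        (\<forall>u\<in>verts G. \<forall>v\<in>verts G.
           adj H u v = (\<Sum>w\<in>verts G. \<Sum>z\<in>verts G.
                          switch_mat Q X s w u * adj G w z * switch_mat Q X s z v)))"

definition vertex_list :: "'a graph \<Rightarrow> 'a list" where
  "vertex_list G = (SOME vs. distinct vs \<and> set vs = verts G)"

definition adj_matrix :: "'a graph \<Rightarrow> real mat" where
  "adj_matrix G = (let vs = vertex_list G in
     mat (length vs) (length vs) (\<lambda>(i, j). adj G (vs ! i) (vs ! j)))"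

definition spectrum_mult :: "real mat \<Rightarrow> real \<Rightarrow> nat" where
  "spectrum_mult A = (\<lambda>x. order x (char_poly A))"

definition cospectral :: "'a graph \<Rightarrow> 'a graph \<Rightarrow> bool" where
  "cospectral G H \<longleftrightarrow> spectrum_mult (adj_matrix G) = spectrum_mult (adj_matrix H)"

end

theory Submission
  imports Defs
begin

lemma sum_vs: assumes "distinct vs"
  shows "(\<Sum>i\<in>{0..<length vs}. f (vs!i)) = sum f (set vs)"
  using sum.reindex_bij_betw[OF bij_betw_nth[OF assms, of "{..<length vs}" "set vs"], of f]
  by (simp add: atLeast0LessThan)

lemma mult_entry: assumes "A \<in> carrier_mat n m" "B \<in> carrier_mat m p" "i < n" "j < p"
  shows "(A * B) $$ (i,j) = (\<Sum>k\<in>{0..<m}. A $$ (i,k) * B $$ (k,j))"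
  using assms by (simp add: scalar_prod_def)

lemma sim_char_poly:
  fixes A B P :: "'a \<Rightarrow> 'a \<Rightarrow> real"
  assumes d: "distinct vs"
  and B: "\<forall>u\<in>set vs. \<forall>v\<in>set vs. B u v = (\<Sum>w\<in>set vs. \<Sum>z\<in>set vs. P w u * A w z * P z v)"
  and O: "\<forall>u\<in>set vs. \<forall>v\<in>set vs. (\<Sum>w\<in>set vs. P u w * P v w) = (if u = v then 1 else 0)"
  shows "char_poly (mat (length vs) (length vs) (\<lambda>(i,j). A (vs!i) (vs!j)))
       = char_poly (mat (length vs) (length vs) (\<lambda>(i,j). B (vs!i) (vs!j)))"
proof -
  define n where "n = length vs"
  define Am where "Am = mat n n (\<lambda>(i,j). A (vs!i) (vs!j))"
  define Bm where "Bm = mat n n (\<lambda>(i,j). B (vs!i) (vs!j))"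
  define Pm where "Pm = mat n n (\<lambda>(i,j). P (vs!i) (vs!j))"
  have carr: "Am \<in> carrier_mat n n" "Bm \<in> carrier_mat n n" "Pm \<in> carrier_mat n n"
    "transpose_mat Pm \<in> carrier_mat n n"
    by (auto simp: Am_def Bm_def Pm_def)
  have PPt: "Pm * transpose_mat Pm = 1\<^sub>m n"
  proof (rule eq_matI)
    fix i j assume ij: "i < dim_row (1\<^sub>m n)" "j < dim_col (1\<^sub>m n)"
    have "(Pm * transpose_mat Pm) $$ (i,j) = (\<Sum>k\<in>{0..<n}. P (vs!i) (vs!k) * P (vs!j) (vs!k))"
      using ij by (simp add: Pm_def scalar_prod_def)
    also have "\<dots> = (\<Sum>w\<in>set vs. P (vs!i) w * P (vs!j) w)"
      unfolding n_def by (rule sum_vs[OF d])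
    also have "\<dots> = (if vs!i = vs!j then 1 else 0)"
      using O ij by (simp add: n_def)
    also have "\<dots> = 1\<^sub>m n $$ (i,j)"
      using ij d by (simp add: n_def nth_eq_iff_index_eq)
    finally show "(Pm * transpose_mat Pm) $$ (i,j) = 1\<^sub>m n $$ (i,j)" .
  qed (auto simp: Pm_def)
  have PtP: "transpose_mat Pm * Pm = 1\<^sub>m n"
    by (rule mat_mult_left_right_inverse[OF carr(3) carr(4) PPt])
  have BPAP: "Bm = transpose_mat Pm * Am * Pm"
  proof (rule eq_matI)
    fix i j assume ij: "i < dim_row (transpose_mat Pm * Am * Pm)" "j < dim_col (transpose_mat Pm * Am * Pm)"
    hence ij': "i < n" "j < n" by (auto simp: Pm_def)
    have "(transpose_mat Pm * Am * Pm) $$ (i,j) = (\<Sum>k\<in>{0..<n}. (transpose_mat Pm * Am) $$ (i,k) * Pm $$ (k,j))"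
      by (rule mult_entry[of _ n n _ n]) (use ij' carr in auto)
    also have "\<dots> = (\<Sum>k\<in>{0..<n}. (\<Sum>l\<in>{0..<n}. P (vs!l) (vs!i) * A (vs!l) (vs!k)) * P (vs!k) (vs!j))"
    proof (rule sum.cong[OF refl])
      fix k assume k: "k \<in> {0..<n}"
      have "(transpose_mat Pm * Am) $$ (i,k) = (\<Sum>l\<in>{0..<n}. transpose_mat Pm $$ (i,l) * Am $$ (l,k))"
        by (rule mult_entry[of _ n n _ n]) (use ij' k carr in auto)
      also have "\<dots> = (\<Sum>l\<in>{0..<n}. P (vs!l) (vs!i) * A (vs!l) (vs!k))"
        using ij' k by (intro sum.cong refl) (auto simp: Pm_def Am_def)
      finally show "(transpose_mat Pm * Am) $$ (i,k) * Pm $$ (k,j) = (\<Sum>l\<in>{0..<n}. P (vs!l) (vs!i) * A (vs!l) (vs!k)) * P (vs!k) (vs!j)"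
        using ij' k by (simp add: Pm_def)
    qed
    also have "\<dots> = (\<Sum>k\<in>{0..<n}. (\<Sum>w\<in>set vs. P w (vs!i) * A w (vs!k)) * P (vs!k) (vs!j))"
    proof (rule sum.cong[OF refl])
      fix k
      have "(\<Sum>l\<in>{0..<n}. P (vs!l) (vs!i) * A (vs!l) (vs!k)) = (\<Sum>w\<in>set vs. P w (vs!i) * A w (vs!k))"
        unfolding n_def by (rule sum_vs[OF d, of "\<lambda>w. P w (vs!i) * A w (vs!k)"])
      then show "(\<Sum>l\<in>{0..<n}. P (vs!l) (vs!i) * A (vs!l) (vs!k)) * P (vs!k) (vs!j) = (\<Sum>w\<in>set vs. P w (vs!i) * A w (vs!k)) * P (vs!k) (vs!j)"
        by simp
    qed
    also have "\<dots> = (\<Sum>z\<in>set vs. (\<Sum>w\<in>set vs. P w (vs!i) * A w z) * P z (vs!j))"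
      unfolding n_def by (rule sum_vs[OF d])
    also have "\<dots> = (\<Sum>z\<in>set vs. \<Sum>w\<in>set vs. P w (vs!i) * A w z * P z (vs!j))"
      by (simp add: sum_distrib_right)
    also have "\<dots> = (\<Sum>w\<in>set vs. \<Sum>z\<in>set vs. P w (vs!i) * A w z * P z (vs!j))"
      by (rule sum.swap)
    also have "\<dots> = B (vs!i) (vs!j)"
      using B ij' by (simp add: n_def)
    finally show "Bm $$ (i,j) = (transpose_mat Pm * Am * Pm) $$ (i,j)"
      using ij' by (simp add: Bm_def)
  qed (auto simp: Pm_def Bm_def)
  have "similar_mat Bm Am"
    unfolding similar_mat_def similar_mat_wit_def Let_def
    apply (rule exI[of _ "transpose_mat Pm"], rule exI[of _ Pm])
    using carr PPt PtP BPAP by (auto simp: Bm_def)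
  from char_poly_similar[OF this] show ?thesis unfolding Am_def Bm_def n_def by simp
qed

lemma sm_zero1: "w \<notin> X \<Longrightarrow> w \<noteq> u \<Longrightarrow> switch_mat Q X s w u = 0"
  by (simp add: switch_mat_def)
lemma sm_zero2: "u \<notin> X \<Longrightarrow> w \<noteq> u \<Longrightarrow> switch_mat Q X s w u = 0"
  by (simp add: switch_mat_def)

theorem lemma3p3:
  fixes G H :: "'a graph" and Q :: "'a \<Rightarrow> 'a \<Rightarrow> real" and X Y :: "'a set"
    and F :: "'a set set"
  assumes "Q_switching G H Q X"
    and "Y \<subseteq> verts G - X"
    and "F \<subseteq> edges (induced G (X \<union> Y))"
    and "F \<inter> edges (nbhd_graph G X) = {}"
  shows "Q_switching (remove_edges (induced G (X \<union> Y)) F)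
                     (remove_edges (induced H (X \<union> Y)) F) Q X
         \<and> cospectral (remove_edges (induced G (X \<union> Y)) F)
                      (remove_edges (induced H (X \<union> Y)) F)"
proof -
  define S where "S = X \<union> Y"
  define G' where "G' = remove_edges (induced G S) F"
  define H' where "H' = remove_edges (induced H S) F"
  define V where "V = verts G"
  from assms(1) have sG: "simple_graph G" and sH: "simple_graph H" and VH: "verts H = V"
    and XV: "X \<subseteq> V" and orth: "orthogonal_on X Q" and nir: "no_integral_rows X Q"
    unfolding Q_switching_def V_def by auto
  from assms(1) obtain s where s1: "\<forall>v\<in>V - X. s v = -1 \<or> s v = 1"
    and sw: "\<forall>u\<in>V. \<forall>v\<in>V. adj H u v = (\<Sum>w\<in>V. \<Sum>z\<in>V.
                          switch_mat Q X s w u * adj G w z * switch_mat Q X s z v)"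
    unfolding Q_switching_def V_def by blast
  define sm where "sm = switch_mat Q X s"
  have finV: "finite V" using sG by (simp add: simple_graph_def V_def)
  have SV: "S \<subseteq> V" using XV assms(2) by (auto simp: S_def V_def)
  have XS: "X \<subseteq> S" by (simp add: S_def)
  have finS: "finite S" using finV SV finite_subset by blast
  have vG': "verts G' = S" and vH': "verts H' = S"
    by (simp_all add: G'_def H'_def remove_edges_def induced_def verts_def)
  have eG': "edges G' = {e \<in> edges G. e \<subseteq> S} - F" and eH': "edges H' = {e \<in> edges H. e \<subseteq> S} - F"
    by (simp_all add: G'_def H'_def remove_edges_def induced_def edges_def)
  have Fnx: "a \<notin> X \<and> b \<notin> X" if "{a,b} \<in> F" for a b
  proof -
    have "{a,b} \<in> edges G" using assms(3) that by (auto simp: induced_def edges_def)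
    hence "{a,b} \<inter> X = {}" using assms(4) that by (auto simp: nbhd_graph_def edges_def)
    thus ?thesis by auto
  qed
  have adjG': "adj G' w z = (if {w,z} \<in> F then 0 else adj G w z)" if "w \<in> S" "z \<in> S" for w z
    using that by (auto simp: adj_def eG')
  have adjH': "adj H' w z = (if {w,z} \<in> F then 0 else adj H w z)" if "w \<in> S" "z \<in> S" for w z
    using that by (auto simp: adj_def eH')
  have Vsum: "(\<Sum>w\<in>V. \<Sum>z\<in>V. sm w u * adj G w z * sm z v)
            = (\<Sum>w\<in>S. \<Sum>z\<in>S. sm w u * adj G w z * sm z v)" if "u \<in> S" "v \<in> S" for u v
  proof (rule sum.mono_neutral_cong_right[OF finV SV])
    show "\<forall>w\<in>V - S. (\<Sum>z\<in>V. sm w u * adj G w z * sm z v) = 0"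
    proof
      fix w assume "w \<in> V - S"
      hence "sm w u = 0" using that XS unfolding sm_def by (intro sm_zero1) auto
      thus "(\<Sum>z\<in>V. sm w u * adj G w z * sm z v) = 0" by simp
    qed
    fix w assume "w \<in> S"
    show "(\<Sum>z\<in>V. sm w u * adj G w z * sm z v) = (\<Sum>z\<in>S. sm w u * adj G w z * sm z v)"
    proof (rule sum.mono_neutral_right[OF finV SV], rule ballI)
      fix z assume "z \<in> V - S"
      hence "sm z v = 0" using that XS unfolding sm_def by (intro sm_zero1) auto
      thus "sm w u * adj G w z * sm z v = 0" by simp
    qed
  qed
  have key: "adj H' u v = (\<Sum>w\<in>S. \<Sum>z\<in>S. sm w u * adj G' w z * sm z v)" if uv: "u \<in> S" "v \<in> S" for u v
  proof (cases "{u,v} \<in> F")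
    case True
    with Fnx have nx: "u \<notin> X" "v \<notin> X" by auto
    have "(\<Sum>w\<in>S. \<Sum>z\<in>S. sm w u * adj G' w z * sm z v) = 0"
    proof (intro sum.neutral ballI)
      fix w z assume wz: "w \<in> S" "z \<in> S"
      show "sm w u * adj G' w z * sm z v = 0"
      proof (cases "w = u \<and> z = v")
        case True thus ?thesis using \<open>{u,v} \<in> F\<close> adjG' wz by simp
      next
        case False thus ?thesis using nx by (auto simp: sm_def sm_zero2)
      qed
    qed
    thus ?thesis using True adjH' uv by simp
  next
    case False
    have "adj H' u v = adj H u v" using False adjH' uv by simp
    also have "\<dots> = (\<Sum>w\<in>S. \<Sum>z\<in>S. sm w u * adj G w z * sm z v)"
    proof -
      have "u \<in> V" "v \<in> V" using uv SV by auto
      hence "adj H u v = (\<Sum>w\<in>V. \<Sum>z\<in>V. sm w u * adj G w z * sm z v)"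
        using sw unfolding sm_def by blast
      thus ?thesis using Vsum[OF uv] by simp
    qed
    also have "\<dots> = (\<Sum>w\<in>S. \<Sum>z\<in>S. sm w u * adj G' w z * sm z v)"
    proof (intro sum.cong refl)
      fix w z assume wz: "w \<in> S" "z \<in> S"
      show "sm w u * adj G w z * sm z v = sm w u * adj G' w z * sm z v"
      proof (cases "{w,z} \<in> F")
        case True
        with Fnx have nx: "w \<notin> X" "z \<notin> X" by auto
        show ?thesis
        proof (cases "w = u \<and> z = v")
          case True thus ?thesis using False \<open>{w,z} \<in> F\<close> by simp
        next
          case False thus ?thesis using nx by (auto simp: sm_def sm_zero1)
        qed
      next
        case False thus ?thesis using adjG' wz by simp
      qed
    qed
    finally show ?thesis .
  qed
  have orthS: "(\<Sum>w\<in>S. sm u w * sm v w) = (if u = v then 1 else 0)" if uv: "u \<in> S" "v \<in> S" for u v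
  proof (cases "u \<in> X \<and> v \<in> X")
    case True
    have "(\<Sum>w\<in>S. sm u w * sm v w) = (\<Sum>w\<in>X. sm u w * sm v w)"
      by (rule sum.mono_neutral_right[OF finS XS]) (use True in \<open>auto simp: sm_def switch_mat_def\<close>)
    also have "\<dots> = (\<Sum>w\<in>X. Q u w * Q v w)"
      using True by (intro sum.cong refl) (auto simp: sm_def switch_mat_def)
    finally show ?thesis using orth True unfolding orthogonal_on_def by simp
  next
    case False
    have "(\<Sum>w\<in>S. sm u w * sm v w) = (\<Sum>w\<in>S. if w = u then (if u = v then s u * s u else 0) else 0)"
      using False by (intro sum.cong refl) (auto simp: sm_def switch_mat_def)
    also have "\<dots> = (if u = v then s u * s u else 0)"
      using uv finS by simp
    also have "\<dots> = (if u = v then 1 else 0)"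
    proof (cases "u = v")
      case True
      with False have "u \<notin> X" by auto
      with s1 uv SV have "s u = -1 \<or> s u = 1" by auto
      thus ?thesis using True by auto
    qed simp
    finally show ?thesis .
  qed
  have QS: "Q_switching G' H' Q X"
    unfolding Q_switching_def
  proof (intro conjI)
    show "simple_graph G'" using sG finS
      by (auto simp: simple_graph_def vG' eG' V_def)
    show "simple_graph H'" using sH finS
      by (auto simp: simple_graph_def vH' eH')
    show "verts H' = verts G'" by (simp add: vG' vH')
    show "X \<subseteq> verts G'" by (simp add: vG' XS)
    show "orthogonal_on X Q" by fact
    show "no_integral_rows X Q" by fact
    show "\<exists>s. (\<forall>v\<in>verts G' - X. s v = -1 \<or> s v = 1) \<and>
        (\<forall>u\<in>verts G'. \<forall>v\<in>verts G'.
           adj H' u v = (\<Sum>w\<in>verts G'. \<Sum>z\<in>verts G'.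
                          switch_mat Q X s w u * adj G' w z * switch_mat Q X s z v))"
      using s1 SV key unfolding vG' sm_def by blast
  qed
  have vl: "vertex_list H' = vertex_list G'"
    by (simp add: vertex_list_def vG' vH')
  obtain vs where vs: "vertex_list G' = vs" by simp
  have vsp: "distinct vs \<and> set vs = S"
    unfolding vs[symmetric] vertex_list_def vG'
    by (rule someI_ex) (use finite_distinct_list[OF finS] in auto)
  have "char_poly (adj_matrix G') = char_poly (adj_matrix H')"
    unfolding adj_matrix_def vl vs Let_def
    by (rule sim_char_poly[where P = sm]) (use vsp key orthS in auto)
  hence "cospectral G' H'"
    unfolding cospectral_def spectrum_mult_def by simp
  with QS show ?thesis unfolding G'_def H'_def S_def by simp
qed

end
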